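(* Let $R=(v_1,\dots,v_\ell)$ be a route and $\xi\in[N]$. For any vector $y^\xi\in\mathbb{Z}^{V_+}_{\ge0}$, we have $y^\xi\in\mathcal{Y}^\xi(\vec R)$ if and only if there exist $f\in\mathbb{R}^A_{\ge0}$ and $g\in\mathbb{R}^{V_+}_{\ge0}$ such that $f_{(v_{i-1},v_i)}+f_{(v_{i+1},v_i)}+d^\xi(v_i)=f_{(v_i,v_{i+1})}+f_{(v_i,v_{i-1})}+g_{v_i}$ for all $i\in[\ell]$; $f_{(v_{i-1},v_i)}\le C/2$ and $f_{(v_i,v_{i-1})}\le C/2$ for all $i\in[\ell+1]$; and $g_{v_i}\le C\,y^\xi_{v_i}$ for all $i\in[\ell]$. In particular, $\mathcal{Y}^\xi(\vec R)=\mathcal{Y}^\xi(\overleftarrow{R})$.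
   Context: $G=(V,E)$ complete undirected graph with $V=\{0\}\cup V_+$ ($0$ depot, $V_+$ customers); $D=(V,A)$ replaces each edge by two opposite arcs. Capacity $C\in\mathbb{Q}_{>0}$; scenarios $\xi\in[N]$ with demand vectors $d^\xi\in\mathbb{Q}^{V_+}_{\ge0}$, $d^\xi(v)\le C$. A route $R=(v_1,\dots,v_\ell)$ is the cycle $0,v_1,\dots,v_\ell,0$ through distinct customers; $v_0=v_{\ell+1}=0$. Its two directed versions are $\vec R=(v_1,\dots,v_\ell)$ (arcs $(0,v_1),(v_1,v_2),\dots,(v_\ell,0)$) and $\overleftarrow R=(v_\ell,\dots,v_1)$. For a directed route $(u_1,\dots,u_\ell)$ (with $u_0=u_{\ell+1}=0$) and scenario $\xi$, $\mathcal{Y}^\xi$ of it is the set of integer vectors $y^\xi\in\mathbb{Z}^{V_+}_{\ge0}$ for which there exist $f\in\mathbb{R}^A_{\ge0}$, $g\in\mathbb{R}^{V_+}_{\ge0}$ with $f_{(u_{i-1},u_i)}+d^\xi(u_i)=f_{(u_i,u_{i+1})}+g_{u_i}$ for $i\in[\ell]$, $f_{(u_{i-1},u_i)}\le C$ for $i\in[\ell+1]$, and $g_{u_i}\le Cy^\xi_{u_i}$ for $i\in[\ell]$. *)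

theory Defs
  imports Complex_Main
begin

(* Vertices have an arbitrary type 'v; the depot is 'dep', the customer set is Vp,
   V = insert dep Vp, and A = arcs of the complete digraph on V. *)

definition arcs :: "'v \<Rightarrow> 'v set \<Rightarrow> ('v \<times> 'v) set" where
  "arcs dep Vp = {(u, w). u \<in> insert dep Vp \<and> w \<in> insert dep Vp \<and> u \<noteq> w}"

definition is_route :: "'v \<Rightarrow> 'v set \<Rightarrow> 'v list \<Rightarrow> bool" where
  "is_route dep Vp R \<longleftrightarrow> distinct R \<and> set R \<subseteq> Vp"

(* padded node sequence: u_0 = u_{l+1} = depot, u_i = R!(i-1) for 1 \<le> i \<le> l *)
definition rnode :: "'v \<Rightarrow> 'v list \<Rightarrow> nat \<Rightarrow> 'v" where
  "rnode dep R i = (if i = 0 \<or> length R < i then dep else R ! (i - 1))"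

(* \<Y>^\<xi> of the directed route given by the list us (arcs (0,u_1),...,(u_l,0)),
   with capacity C and the scenario demand vector d *)
definition Yset :: "'v \<Rightarrow> 'v set \<Rightarrow> real \<Rightarrow> ('v \<Rightarrow> real) \<Rightarrow> 'v list \<Rightarrow> ('v \<Rightarrow> int) set" where
  "Yset dep Vp C d us = {y. (\<forall>v\<in>Vp. 0 \<le> y v) \<and>
     (\<exists>(f :: 'v \<times> 'v \<Rightarrow> real) (g :: 'v \<Rightarrow> real).
        (\<forall>a\<in>arcs dep Vp. 0 \<le> f a) \<and> (\<forall>v\<in>Vp. 0 \<le> g v) \<and>
        (\<forall>i\<in>{1..length us}.
            f (rnode dep us (i - 1), rnode dep us i) + d (rnode dep us i)
              = f (rnode dep us i, rnode dep us (i + 1)) + g (rnode dep us i)) \<and>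
        (\<forall>i\<in>{1..length us + 1}. f (rnode dep us (i - 1), rnode dep us i) \<le> C) \<and>
        (\<forall>i\<in>{1..length us}. g (rnode dep us i) \<le> C * of_int (y (rnode dep us i))))}"

end

theory Submission
  imports Defs
begin

definition Fw :: "'v \<Rightarrow> 'v set \<Rightarrow> real \<Rightarrow> ('v \<Rightarrow> real) \<Rightarrow> 'v list \<Rightarrow> ('v \<Rightarrow> int) \<Rightarrow> ('v \<times> 'v \<Rightarrow> real) \<Rightarrow> ('v \<Rightarrow> real) \<Rightarrow> bool" where
 "Fw dep Vp C d us y f g \<longleftrightarrow>
        (\<forall>a\<in>arcs dep Vp. 0 \<le> f a) \<and> (\<forall>v\<in>Vp. 0 \<le> g v) \<and>
        (\<forall>i\<in>{1..length us}.
            f (rnode dep us (i - 1), rnode dep us i) + d (rnode dep us i)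
              = f (rnode dep us i, rnode dep us (i + 1)) + g (rnode dep us i)) \<and>
        (\<forall>i\<in>{1..length us + 1}. f (rnode dep us (i - 1), rnode dep us i) \<le> C) \<and>
        (\<forall>i\<in>{1..length us}. g (rnode dep us i) \<le> C * of_int (y (rnode dep us i)))"

definition Bi :: "'v \<Rightarrow> 'v set \<Rightarrow> real \<Rightarrow> ('v \<Rightarrow> real) \<Rightarrow> 'v list \<Rightarrow> ('v \<Rightarrow> int) \<Rightarrow> ('v \<times> 'v \<Rightarrow> real) \<Rightarrow> ('v \<Rightarrow> real) \<Rightarrow> bool" where
 "Bi dep Vp C d R y f g \<longleftrightarrow>
               (\<forall>a\<in>arcs dep Vp. 0 \<le> f a) \<and> (\<forall>v\<in>Vp. 0 \<le> g v) \<and>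
               (\<forall>i\<in>{1..length R}.
                  f (rnode dep R (i - 1), rnode dep R i) + f (rnode dep R (i + 1), rnode dep R i)
                    + d (rnode dep R i)
                  = f (rnode dep R i, rnode dep R (i + 1)) + f (rnode dep R i, rnode dep R (i - 1))
                    + g (rnode dep R i)) \<and>
               (\<forall>i\<in>{1..length R + 1}.
                  f (rnode dep R (i - 1), rnode dep R i) \<le> C / 2 \<and>
                  f (rnode dep R i, rnode dep R (i - 1)) \<le> C / 2) \<and>
               (\<forall>i\<in>{1..length R}. g (rnode dep R i) \<le> C * of_int (y (rnode dep R i)))"

lemma Yset_Fw: "Yset dep Vp C d us = {y. (\<forall>v\<in>Vp. 0 \<le> y v) \<and> (\<exists>f g. Fw dep Vp C d us y f g)}"
  unfolding Yset_def Fw_def by simp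

lemma rn0[simp]: "rnode dep R 0 = dep" by (simp add: rnode_def)
lemma rnL[simp]: "rnode dep R (Suc (length R)) = dep" by (simp add: rnode_def)
lemma rn_in: "set R \<subseteq> Vp \<Longrightarrow> 1 \<le> i \<Longrightarrow> i \<le> length R \<Longrightarrow> rnode dep R i \<in> Vp"
proof -
  assume a: "set R \<subseteq> Vp" "1 \<le> i" "i \<le> length R"
  then have "R ! (i-1) \<in> set R" by (intro nth_mem) auto
  then show ?thesis using a by (auto simp: rnode_def)
qed
lemma rn_inj: "distinct R \<Longrightarrow> 1 \<le> i \<Longrightarrow> i \<le> length R \<Longrightarrow> 1 \<le> j \<Longrightarrow> j \<le> length R
   \<Longrightarrow> rnode dep R i = rnode dep R j \<Longrightarrow> i = j"
  by (auto simp: rnode_def nth_eq_iff_index_eq)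
lemma rn_dep: "set R \<subseteq> Vp \<Longrightarrow> dep \<notin> Vp \<Longrightarrow> rnode dep R i = dep \<Longrightarrow> i \<le> length R + 1 \<Longrightarrow> i = 0 \<or> i = length R + 1"
  using rn_in[of R Vp i dep] by (cases "i = 0 \<or> i = length R + 1") auto
lemma rn_V: "set R \<subseteq> Vp \<Longrightarrow> rnode dep R i \<in> insert dep Vp"
  using rn_in[of R Vp i dep] by (cases "i = 0 \<or> length R < i") (auto simp: rnode_def)

lemma rn_rev: "rnode dep (rev R) i = rnode dep R (length R + 1 - i)"
  by (auto simp: rnode_def rev_nth)

lemma arc_in:
  assumes "distinct R" "set R \<subseteq> Vp" "dep \<notin> Vp" "1 \<le> length R" "1 \<le> i" "i \<le> length R + 1"
  shows "(rnode dep R (i-1), rnode dep R i) \<in> arcs dep Vp" "(rnode dep R i, rnode dep R (i-1)) \<in> arcs dep Vp"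
proof -
  have ne: "rnode dep R (i-1) \<noteq> rnode dep R i"
  proof
    assume e: "rnode dep R (i-1) = rnode dep R i"
    show False
    proof (cases "i - 1 = 0")
      case True
      then have "rnode dep R i = dep" using e by simp
      then have "i = length R + 1" using rn_dep[OF assms(2,3)] assms True by fastforce
      then show False using True assms by simp
    next
      case False
      then have "rnode dep R (i-1) \<in> Vp" using rn_in[OF assms(2)] assms by auto
      then have "i \<le> length R" using e assms(3,6) by (cases "i = length R + 1") auto
      have "i - 1 = i" by (rule rn_inj[OF assms(1), of "i-1" i dep]) (use e False assms \<open>i \<le> length R\<close> in auto)
      then show False using False by simp
    qed
  qed
  then show "(rnode dep R (i-1), rnode dep R i) \<in> arcs dep Vp" "(rnode dep R i, rnode dep R (i-1)) \<in> arcs dep Vp"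
    using rn_V[OF assms(2)] by (auto simp: arcs_def)
qed

lemma no_clash:
  assumes "distinct R" "set R \<subseteq> Vp" "dep \<notin> Vp" "2 \<le> length R" "1 \<le> i" "i \<le> length R + 1"
     "1 \<le> j" "j \<le> length R + 1"
  shows "(rnode dep R i, rnode dep R (i-1)) \<noteq> (rnode dep R (j-1), rnode dep R j)"
proof
  assume e: "(rnode dep R i, rnode dep R (i-1)) = (rnode dep R (j-1), rnode dep R j)"
  then have e1: "rnode dep R i = rnode dep R (j-1)" and e2: "rnode dep R (i-1) = rnode dep R j" by auto
  show False
  proof (cases "i \<le> length R")
    case True
    then have iv: "rnode dep R i \<in> Vp" using rn_in[OF assms(2)] assms by auto
    then have "j - 1 \<noteq> 0" using e1 assms(3) by auto
    moreover have "j - 1 \<le> length R" using assms by auto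
    ultimately have "i = j - 1" using rn_inj[OF assms(1), of i "j-1" dep] e1 assms True by auto
    then have j: "j = i + 1" using \<open>j - 1 \<noteq> 0\<close> by auto
    show False
    proof (cases "i - 1 = 0")
      case True
      then have "rnode dep R j = dep" using e2 by simp
      then have "j = length R + 1" using rn_dep[OF assms(2,3)] assms j by fastforce
      then show False using True j assms by auto
    next
      case False
      then have "rnode dep R (i-1) \<in> Vp" using rn_in[OF assms(2)] assms by auto
      then have "j \<le> length R" using e2 assms(3,8) by (cases "j = length R + 1") auto
      have "i - 1 = j" by (rule rn_inj[OF assms(1), of "i-1" j dep]) (use e2 False assms \<open>j \<le> length R\<close> in auto)
      then show False using j by simp
    qed
  next
    case False
    then have i: "i = length R + 1" using assms by auto
    then have "rnode dep R (j-1) = dep" using e1 by simp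
    then have "j - 1 = 0" using rn_dep[OF assms(2,3), of "j-1"] assms by fastforce
    then have "rnode dep R (length R) = rnode dep R 1" using e2 i assms by (simp add: \<open>j-1=0\<close>)
    then show False using rn_inj[OF assms(1), of "length R" 1 dep] assms by auto
  qed
qed

lemma ball_1_1: "(\<forall>i\<in>{1..Suc 0}. P i) \<longleftrightarrow> P (1::nat)" by auto
lemma ball_1_2: "(\<forall>i\<in>{Suc 0..Suc (Suc 0)}. P i) \<longleftrightarrow> P (Suc 0) \<and> P (Suc (Suc 0))"
  by (auto simp: le_Suc_eq)

lemma fw_bi_small:
  assumes "length R \<le> 1" "Fw dep Vp C d R y f g"
  shows "Bi dep Vp C d R y (\<lambda>a. f a / 2) g"
proof (cases R)
  case Nil
  then show ?thesis using assms by (auto simp: Fw_def Bi_def rnode_def)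
next
  case (Cons v R')
  then have R: "R = [v]" using assms by (cases R') auto
  have [simp]: "rnode dep [v] (Suc 0) = v" "rnode dep [v] (Suc (Suc 0)) = dep" by (auto simp: rnode_def)
  show ?thesis using assms(2) unfolding R Fw_def Bi_def by (simp add: ball_1_1 ball_1_2)
qed

lemma bi_fw_small:
  assumes "length R \<le> 1" "Bi dep Vp C d R y F g"
  shows "Fw dep Vp C d R y (\<lambda>a. 2 * F a) g"
proof (cases R)
  case Nil
  then show ?thesis using assms by (auto simp: Fw_def Bi_def rnode_def)
next
  case (Cons v R')
  then have R: "R = [v]" using assms by (cases R') auto
  have [simp]: "rnode dep [v] (Suc 0) = v" "rnode dep [v] (Suc (Suc 0)) = dep" by (auto simp: rnode_def)
  show ?thesis using assms(2) unfolding R Fw_def Bi_def by (simp add: ball_1_1 ball_1_2)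
qed

lemma bi_fw:
  assumes "distinct R" "set R \<subseteq> Vp" "dep \<notin> Vp" "Bi dep Vp C d R y F g" "0 < C"
  shows "\<exists>f. Fw dep Vp C d R y f g"
proof -
  define f where "f a = max 0 (min C (F a - F (snd a, fst a) + C/2))" for a :: "'a \<times> 'a"
  let ?r = "rnode dep R"
  have B: "\<forall>a\<in>arcs dep Vp. 0 \<le> F a" "\<forall>v\<in>Vp. 0 \<le> g v"
     "\<forall>i\<in>{1..length R}. F (?r (i - 1), ?r i) + F (?r (i + 1), ?r i) + d (?r i)
                  = F (?r i, ?r (i + 1)) + F (?r i, ?r (i - 1)) + g (?r i)"
     "\<forall>i\<in>{1..length R + 1}. F (?r (i - 1), ?r i) \<le> C / 2 \<and> F (?r i, ?r (i - 1)) \<le> C / 2"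
     "\<forall>i\<in>{1..length R}. g (?r i) \<le> C * of_int (y (?r i))"
    using assms(4) unfolding Bi_def by auto
  have fv: "f (?r (i-1), ?r i) = F (?r (i-1), ?r i) - F (?r i, ?r (i-1)) + C/2"
    if "1 \<le> length R" "1 \<le> i" "i \<le> length R + 1" for i
  proof -
    have "0 \<le> F (?r (i-1), ?r i)" "0 \<le> F (?r i, ?r (i-1))"
      using B(1) arc_in[OF assms(1-3) that] by auto
    moreover have "F (?r (i-1), ?r i) \<le> C/2" "F (?r i, ?r (i-1)) \<le> C/2" using B(4) that by auto
    ultimately show ?thesis unfolding f_def by simp
  qed
  have "Fw dep Vp C d R y f g"
    unfolding Fw_def
  proof (intro conjI ballI)
    fix a show "0 \<le> f a" by (simp add: f_def)
  next
    fix v assume "v \<in> Vp" then show "0 \<le> g v" using B(2) by auto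
  next
    fix i assume i: "i \<in> {1..length R}"
    have e1: "f (?r (i-1), ?r i) = F (?r (i-1), ?r i) - F (?r i, ?r (i-1)) + C/2"
      using fv[of i] i by auto
    have e2: "f (?r i, ?r (i+1)) = F (?r i, ?r (i+1)) - F (?r (i+1), ?r i) + C/2"
      using fv[of "i+1"] i by auto
    show "f (?r (i - 1), ?r i) + d (?r i) = f (?r i, ?r (i + 1)) + g (?r i)"
    proof -
      have "F (?r (i - 1), ?r i) + F (?r (i + 1), ?r i) + d (?r i)
                  = F (?r i, ?r (i + 1)) + F (?r i, ?r (i - 1)) + g (?r i)" using B(3) i by blast
      then show ?thesis using e1 e2 by linarith
    qed
  next
    fix i assume "i \<in> {1..length R + 1}"
    show "f (?r (i - 1), ?r i) \<le> C" using assms(5) by (simp add: f_def)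
  next
    fix i assume "i \<in> {1..length R}"
    then show "g (?r i) \<le> C * of_int (y (?r i))" using B(5) by auto
  qed
  then show ?thesis by blast
qed

lemma fw_bi_big:
  assumes "distinct R" "set R \<subseteq> Vp" "dep \<notin> Vp" "Fw dep Vp C d R y f g" "2 \<le> length R"
  shows "\<exists>F. Bi dep Vp C d R y F g"
proof -
  let ?r = "rnode dep R"
  let ?FA = "{(?r (i-1), ?r i) | i. i \<in> {1..length R + 1}}"
  define F where "F a = (if a \<in> ?FA then f a / 2 else if (snd a, fst a) \<in> ?FA then (C - f (snd a, fst a)) / 2 else 0)" for a
  have B: "\<forall>a\<in>arcs dep Vp. 0 \<le> f a" "\<forall>v\<in>Vp. 0 \<le> g v"
     "\<forall>i\<in>{1..length R}. f (?r (i - 1), ?r i) + d (?r i) = f (?r i, ?r (i + 1)) + g (?r i)"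
     "\<forall>i\<in>{1..length R + 1}. f (?r (i - 1), ?r i) \<le> C"
     "\<forall>i\<in>{1..length R}. g (?r i) \<le> C * of_int (y (?r i))"
    using assms(4) unfolding Fw_def by auto
  have Ff: "F (?r (i-1), ?r i) = f (?r (i-1), ?r i) / 2" if "1 \<le> i" "i \<le> length R + 1" for i
    using that unfolding F_def by auto
  have Fb: "F (?r i, ?r (i-1)) = (C - f (?r (i-1), ?r i)) / 2" if "1 \<le> i" "i \<le> length R + 1" for i
  proof -
    have "(?r i, ?r (i-1)) \<notin> ?FA" using no_clash[OF assms(1-3,5) that] by auto
    then show ?thesis using that unfolding F_def by auto
  qed
  have "Bi dep Vp C d R y F g"
    unfolding Bi_def
  proof (intro conjI ballI)
    fix a assume a: "a \<in> arcs dep Vp"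
    show "0 \<le> F a"
    proof (cases "a \<in> ?FA")
      case True then show ?thesis using a B(1) unfolding F_def by (simp only: if_P[OF True]) simp
    next
      case False
      show ?thesis
      proof (cases "(snd a, fst a) \<in> ?FA")
        case True
        then obtain i where "i \<in> {1..length R + 1}" "(snd a, fst a) = (?r (i-1), ?r i)" by blast
        then have "f (snd a, fst a) \<le> C" using B(4) by auto
        then show ?thesis unfolding F_def by (simp only: if_not_P[OF False] if_P[OF True]) simp
      next
        case False2: False
        then show ?thesis unfolding F_def by (simp only: if_not_P[OF False] if_not_P[OF False2]) simp
      qed
    qed
  next
    fix v assume "v \<in> Vp" then show "0 \<le> g v" using B(2) by auto
  next
    fix i assume i: "i \<in> {1..length R}"
    have c1: "F (?r (i-1), ?r i) = f (?r (i-1), ?r i) / 2" "F (?r i, ?r (i-1)) = (C - f (?r (i-1), ?r i)) / 2"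
      using Ff[of i] Fb[of i] i by auto
    have c2: "F (?r i, ?r (i+1)) = f (?r i, ?r (i+1)) / 2" "F (?r (i+1), ?r i) = (C - f (?r i, ?r (i+1))) / 2"
      using Ff[of "i+1"] Fb[of "i+1"] i by auto
    have c3: "f (?r (i - 1), ?r i) + d (?r i) = f (?r i, ?r (i + 1)) + g (?r i)" using B(3) i by blast
    show "F (?r (i - 1), ?r i) + F (?r (i + 1), ?r i) + d (?r i) =
         F (?r i, ?r (i + 1)) + F (?r i, ?r (i - 1)) + g (?r i)"
      unfolding c1 c2 using c3 by (simp add: field_simps)
  next
    fix i assume i: "i \<in> {1..length R + 1}"
    have a0: "0 \<le> f (?r (i-1), ?r i)" using B(1) arc_in[OF assms(1-3), of i] i assms(5) by auto
    have "f (?r (i-1), ?r i) \<le> C" using B(4) i by auto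
    then show "F (?r (i - 1), ?r i) \<le> C / 2"
      using Ff[of i] Fb[of i] i a0 by auto
  next
    fix i assume i: "i \<in> {1..length R + 1}"
    have a0: "0 \<le> f (?r (i-1), ?r i)" using B(1) arc_in[OF assms(1-3), of i] i assms(5) by auto
    then show "F (?r i, ?r (i - 1)) \<le> C / 2"
      using Ff[of i] Fb[of i] i a0 by auto
  next
    fix i assume "i \<in> {1..length R}"
    then show "g (?r i) \<le> C * of_int (y (?r i))" using B(5) by auto
  qed
  then show ?thesis by blast
qed

lemma bi_rev:
  assumes "Bi dep Vp C d R y F g"
  shows "Bi dep Vp C d (rev R) y F g"
proof -
  let ?r = "rnode dep R"
  let ?l = "length R"
  have B: "\<forall>a\<in>arcs dep Vp. 0 \<le> F a" "\<forall>v\<in>Vp. 0 \<le> g v"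
     "\<forall>i\<in>{1..length R}. F (?r (i - 1), ?r i) + F (?r (i + 1), ?r i) + d (?r i)
                  = F (?r i, ?r (i + 1)) + F (?r i, ?r (i - 1)) + g (?r i)"
     "\<forall>i\<in>{1..length R + 1}. F (?r (i - 1), ?r i) \<le> C / 2 \<and> F (?r i, ?r (i - 1)) \<le> C / 2"
     "\<forall>i\<in>{1..length R}. g (?r i) \<le> C * of_int (y (?r i))"
    using assms unfolding Bi_def by auto
  show ?thesis unfolding Bi_def length_rev rn_rev
  proof (intro conjI ballI)
    fix a assume "a \<in> arcs dep Vp" then show "0 \<le> F a" using B(1) by auto
  next
    fix v assume "v \<in> Vp" then show "0 \<le> g v" using B(2) by auto
  next
    fix i assume i: "i \<in> {1..?l}"
    define j where "j = ?l + 1 - i"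
    have j: "j \<in> {1..?l}" "?l + 1 - (i - 1) = j + 1" "?l + 1 - (i + 1) = j - 1" "?l + 1 - i = j"
      using i unfolding j_def by auto
    show "F (?r (?l + 1 - (i - 1)), ?r (?l + 1 - i)) + F (?r (?l + 1 - (i + 1)), ?r (?l + 1 - i)) +
         d (?r (?l + 1 - i)) =
         F (?r (?l + 1 - i), ?r (?l + 1 - (i + 1))) + F (?r (?l + 1 - i), ?r (?l + 1 - (i - 1))) +
         g (?r (?l + 1 - i))"
    proof -
      have "F (?r (j - 1), ?r j) + F (?r (j + 1), ?r j) + d (?r j)
                  = F (?r j, ?r (j + 1)) + F (?r j, ?r (j - 1)) + g (?r j)" using B(3) j(1) by blast
      then show ?thesis unfolding j(2-4) by linarith
    qed
  next
    fix i assume i: "i \<in> {1..?l + 1}"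
    define j where "j = ?l + 2 - i"
    have j: "j \<in> {1..?l+1}" "?l + 1 - (i - 1) = j" "?l + 1 - i = j - 1"
      using i unfolding j_def by auto
    show "F (?r (?l + 1 - (i - 1)), ?r (?l + 1 - i)) \<le> C / 2"
      unfolding j(2-3) using B(4) j(1) by fastforce
  next
    fix i assume i: "i \<in> {1..?l + 1}"
    define j where "j = ?l + 2 - i"
    have j: "j \<in> {1..?l+1}" "?l + 1 - (i - 1) = j" "?l + 1 - i = j - 1"
      using i unfolding j_def by auto
    show "F (?r (?l + 1 - i), ?r (?l + 1 - (i - 1))) \<le> C / 2"
      unfolding j(2-3) using B(4) j(1) by fastforce
  next
    fix i assume i: "i \<in> {1..?l}"
    have j: "?l + 1 - i \<in> {1..?l}" using i by auto
    show "g (?r (?l + 1 - i)) \<le> C * of_int (y (?r (?l + 1 - i)))" using B(5) j by blast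
  qed
qed

lemma main_eq:
  assumes "distinct R" "set R \<subseteq> Vp" "dep \<notin> Vp" "0 < C"
  shows "(\<exists>f g. Fw dep Vp C d R y f g) \<longleftrightarrow> (\<exists>F g. Bi dep Vp C d R y F g)"
proof
  assume "\<exists>f g. Fw dep Vp C d R y f g"
  then obtain f g where fg: "Fw dep Vp C d R y f g" by blast
  show "\<exists>F g. Bi dep Vp C d R y F g"
  proof (cases "length R \<le> 1")
    case True then show ?thesis using fw_bi_small[OF True fg] by blast
  next
    case False then show ?thesis using fw_bi_big[OF assms(1-3) fg] by auto
  qed
next
  assume "\<exists>F g. Bi dep Vp C d R y F g"
  then show "\<exists>f g. Fw dep Vp C d R y f g" using bi_fw[OF assms(1-3) _ assms(4)] by blast
qed

theorem lemma1:
  fixes dep :: 'v and Vp :: "'v set" and C :: real and N :: nat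
    and d :: "nat \<Rightarrow> 'v \<Rightarrow> real" and R :: "'v list" and \<xi> :: nat
  assumes "finite Vp" and "dep \<notin> Vp"
    and "C \<in> \<rat>" and "0 < C"
    and "\<And>\<xi>' v. \<xi>' \<in> {1..N} \<Longrightarrow> v \<in> Vp \<Longrightarrow> d \<xi>' v \<in> \<rat> \<and> 0 \<le> d \<xi>' v \<and> d \<xi>' v \<le> C"
    and "is_route dep Vp R"
    and "\<xi> \<in> {1..N}"
  shows "(\<forall>y :: 'v \<Rightarrow> int. (\<forall>v\<in>Vp. 0 \<le> y v) \<longrightarrow>
           (y \<in> Yset dep Vp C (d \<xi>) R \<longleftrightarrow>
            (\<exists>(f :: 'v \<times> 'v \<Rightarrow> real) (g :: 'v \<Rightarrow> real).
               (\<forall>a\<in>arcs dep Vp. 0 \<le> f a) \<and> (\<forall>v\<in>Vp. 0 \<le> g v) \<and>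
               (\<forall>i\<in>{1..length R}.
                  f (rnode dep R (i - 1), rnode dep R i) + f (rnode dep R (i + 1), rnode dep R i)
                    + d \<xi> (rnode dep R i)
                  = f (rnode dep R i, rnode dep R (i + 1)) + f (rnode dep R i, rnode dep R (i - 1))
                    + g (rnode dep R i)) \<and>
               (\<forall>i\<in>{1..length R + 1}.
                  f (rnode dep R (i - 1), rnode dep R i) \<le> C / 2 \<and>
                  f (rnode dep R i, rnode dep R (i - 1)) \<le> C / 2) \<and>
               (\<forall>i\<in>{1..length R}. g (rnode dep R i) \<le> C * of_int (y (rnode dep R i))))))
         \<and> Yset dep Vp C (d \<xi>) R = Yset dep Vp C (d \<xi>) (rev R)"
proof -
  have rt: "distinct R" "set R \<subseteq> Vp" using assms(6) by (auto simp: is_route_def)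
  have rt': "distinct (rev R)" "set (rev R) \<subseteq> Vp" using rt by auto
  have key: "y \<in> Yset dep Vp C (d \<xi>) Q \<longleftrightarrow> (\<exists>F g. Bi dep Vp C (d \<xi>) Q y F g)"
    if "distinct Q" "set Q \<subseteq> Vp" "\<forall>v\<in>Vp. 0 \<le> y v" for Q y
    using main_eq[OF that(1,2) assms(2,4), of "d \<xi>" y] that(3) unfolding Yset_Fw by auto
  have P1: "\<forall>y :: 'v \<Rightarrow> int. (\<forall>v\<in>Vp. 0 \<le> y v) \<longrightarrow>
           (y \<in> Yset dep Vp C (d \<xi>) R \<longleftrightarrow> (\<exists>F g. Bi dep Vp C (d \<xi>) R y F g))"
    using key[OF rt] by blast
  have P2: "Yset dep Vp C (d \<xi>) R = Yset dep Vp C (d \<xi>) (rev R)"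
  proof (rule set_eqI)
    fix y
    show "y \<in> Yset dep Vp C (d \<xi>) R \<longleftrightarrow> y \<in> Yset dep Vp C (d \<xi>) (rev R)"
    proof (cases "\<forall>v\<in>Vp. 0 \<le> y v")
      case True
      show ?thesis unfolding key[OF rt True] key[OF rt' True]
        using bi_rev[of dep Vp C "d \<xi>" R y] bi_rev[of dep Vp C "d \<xi>" "rev R" y] by (simp only: rev_rev_ident) blast
    next
      case False
      then show ?thesis unfolding Yset_Fw by auto
    qed
  qed
  show ?thesis using P1 P2 unfolding Bi_def by blast
qed

end
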